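(* Let $q\ge 2$ be a prime power, $n=q^2(q^2-q+1)$, $m=2^{24}q^2$, and let $X\subseteq V(H_q)$ with $|X|=m$. Then at least one of the following holds: (a) $\displaystyle\sum_{T\in\mathcal T_X,\ |T|\le \sqrt{2m}/\log n}\binom{|T|}{2}\;\ge\;\frac{m^2}{64q}$; (b) $\displaystyle\sum_{T\in\mathcal T_X,\ \sqrt{2m}/\log n<|T|\le \sqrt{2m}}\binom{|T|}{2}\;\ge\;\frac{q\,m^{3/2}}{16\log^2 n}$. (Each sum counts the edges of $H_q[X]$ lying in the cliques of $\mathcal T_X$ of the indicated orders.)
   Context: $\mathcal H$ is the Hermitian unital $\{\langle x,y,z\rangle : x^{q+1}+y^{q+1}+z^{q+1}=0\}$ in the projective plane $\mathrm{PG}(2,q^2)$ (it has $q^3+1$ points and every line meets it in $1$ or $q+1$ points; lines meeting it in $q+1$ points are secants). $H_q$ is the graph on the set of secants, two distinct secants adjacent iff they meet in a point of $\mathcal H$. For $P\in\mathcal H$, $C_P$ is the set of secants through $P$ and $\mathcal C=\{C_P:P\in\mathcal H\}$; these are $q^3+1$ cliques of order $q^2$, any two sharing exactly one vertex, every vertex lies in exactly $q+1$ of them, and every edge of $H_q$ lies in exactly one of them. For $X\subseteq V(H_q)$, $\mathcal T_X=\{X\cap C : C\in\mathcal C,\ |X\cap C|\ge 2\}$ (indexed by the cliques $C$). Logarithms are natural. *)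

theory Defs
  imports Complex_Main "HOL-Computational_Algebra.Primes"
begin

text \<open>Vectors of F^3 for a finite field F of order q^2 (F = GF(q^2)).\<close>
type_synonym 'a vec3 = "'a \<times> 'a \<times> 'a"
type_synonym 'a ppoint = "'a vec3 set"     \<comment> \<open>a projective point = set of nonzero multiples\<close>
type_synonym 'a pline = "'a ppoint set"    \<comment> \<open>a line = its set of points\<close>

definition smult3 :: "'a::field \<Rightarrow> 'a vec3 \<Rightarrow> 'a vec3" where
  "smult3 c v = (case v of (x, y, z) \<Rightarrow> (c * x, c * y, c * z))"

definition dot3 :: "'a::field vec3 \<Rightarrow> 'a vec3 \<Rightarrow> 'a" where
  "dot3 u v = (case u of (a, b, c) \<Rightarrow> case v of (x, y, z) \<Rightarrow> a * x + b * y + c * z)"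

definition proj_point :: "'a::field vec3 \<Rightarrow> 'a ppoint" where
  "proj_point v = {smult3 c v | c. c \<noteq> 0}"

definition pg_points :: "'a::field ppoint set" where
  "pg_points = {proj_point v | v. v \<noteq> (0, 0, 0)}"

definition pg_line :: "'a::field vec3 \<Rightarrow> 'a pline" where
  "pg_line a = {P \<in> pg_points. \<exists>v\<in>P. dot3 a v = 0}"

definition pg_lines :: "'a::field pline set" where
  "pg_lines = {pg_line a | a. a \<noteq> (0, 0, 0)}"

definition herm :: "nat \<Rightarrow> 'a::field vec3 \<Rightarrow> 'a" where
  "herm q v = (case v of (x, y, z) \<Rightarrow> x ^ (q + 1) + y ^ (q + 1) + z ^ (q + 1))"

definition unital :: "nat \<Rightarrow> 'a::field ppoint set" where
  "unital q = {P \<in> pg_points. \<exists>v\<in>P. herm q v = 0}"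

text \<open>Secants: lines meeting \<H> in q+1 points; these are the vertices of H_q.\<close>
definition secants :: "nat \<Rightarrow> 'a::field pline set" where
  "secants q = {L \<in> pg_lines. card (L \<inter> unital q) = q + 1}"

definition clique :: "nat \<Rightarrow> 'a::field ppoint \<Rightarrow> 'a pline set" where
  "clique q P = {L \<in> secants q. P \<in> L}"

text \<open>Sum of binom(|T|,2) over T = X \<inter> C_P in \<T>_X (i.e. |T| \<ge> 2), indexed by the cliques
  C_P (P \<in> \<H>), restricted to those with lo < |T| \<le> hi.\<close>
definition clique_sum :: "nat \<Rightarrow> 'a::field pline set \<Rightarrow> real \<Rightarrow> real \<Rightarrow> real" where
  "clique_sum q X lo hi =
     (\<Sum>P \<in> {P \<in> unital q. 2 \<le> card (X \<inter> clique q P)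
                 \<and> lo < real (card (X \<inter> clique q P)) \<and> real (card (X \<inter> clique q P)) \<le> hi}.
        real (card (X \<inter> clique q P) choose 2))"

end

theory Submission
  imports Defs "HOL-Computational_Algebra.Polynomial"
begin

lemma cs_sum:
  fixes f :: "'b \<Rightarrow> real"
  assumes "finite S"
  shows "(\<Sum>x\<in>S. f x)^2 \<le> real (card S) * (\<Sum>x\<in>S. (f x)^2)"
proof (cases "S = {}")
  case True then show ?thesis by simp
next
  case False
  define c where "c = real (card S)"
  have c: "c > 0" using False assms by (simp add: c_def card_gt_0_iff)
  define s where "s = (\<Sum>x\<in>S. f x)"
  have "0 \<le> (\<Sum>x\<in>S. (c * f x - s)^2)" by (intro sum_nonneg) auto
  also have "\<dots> = (\<Sum>x\<in>S. c^2*(f x)^2 - (2*c*s)*f x + s^2)"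
    by (rule sum.cong) (auto simp: power2_eq_square algebra_simps)
  also have "\<dots> = c^2 * (\<Sum>x\<in>S. (f x)^2) - (2 * c * s) * s + c * s^2"
    by (simp add: sum_subtractf sum.distrib sum_distrib_left c_def s_def)
  finally have "s^2 * c \<le> c * (c * (\<Sum>x\<in>S. (f x)^2))" by (simp add: power2_eq_square algebra_simps)
  then have "s^2 \<le> c * (\<Sum>x\<in>S. (f x)^2)" using c by (simp add: mult.commute)
  then show ?thesis by (simp add: s_def c_def)
qed

lemma smult3_smult3: "smult3 c (smult3 d v) = smult3 (c*d) v"
  by (cases v) (auto simp: smult3_def)
lemma smult3_1: "smult3 1 v = v"
  by (cases v) (auto simp: smult3_def)

lemma proj_point_smult: "(c::'a::field) \<noteq> 0 \<Longrightarrow> proj_point (smult3 c v) = proj_point v"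
proof -
  assume c: "c \<noteq> 0"
  have 1: "smult3 d (smult3 c v) \<in> {smult3 e v |e. e \<noteq> 0}" if "d \<noteq> 0" for d
    using c that by (auto simp: smult3_smult3 intro!: exI[of _ "d*c"])
  have 2: "smult3 d v \<in> {smult3 e (smult3 c v) |e. e \<noteq> 0}" if "d \<noteq> 0" for d
    using c that by (auto simp: smult3_smult3 intro!: exI[of _ "d/c"])
  show ?thesis unfolding proj_point_def using 1 2 by blast
qed

lemma mem_proj_point: "x \<in> proj_point v \<Longrightarrow> proj_point x = proj_point (v::'a::field vec3)"
proof -
  assume "x \<in> proj_point v"
  then obtain c where "c \<noteq> 0" "x = smult3 c v" unfolding proj_point_def by auto
  then show ?thesis using proj_point_smult by metis
qed

lemma smult3_eq0: "smult3 c v = (0,0,0) \<longleftrightarrow> c = 0 \<or> v = ((0::'a::field),0,0)"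
  by (cases v) (auto simp: smult3_def)

lemma dot_smult: "dot3 a (smult3 c v) = c * dot3 a v"
  by (cases a; cases v) (auto simp: smult3_def dot3_def algebra_simps)
lemma dot_smult1: "dot3 (smult3 c a) v = c * dot3 a v"
  by (cases a; cases v) (auto simp: smult3_def dot3_def algebra_simps)

lemma herm_smult: "herm q (smult3 c v) = c^(q+1) * herm q v"
  by (cases v) (auto simp: smult3_def herm_def algebra_simps power_mult_distrib)

definition cross :: "'a::field vec3 \<Rightarrow> 'a vec3 \<Rightarrow> 'a vec3" where
  "cross u v = (case u of (x1,x2,x3) \<Rightarrow> case v of (y1,y2,y3) \<Rightarrow>
      (x2*y3 - x3*y2, x3*y1 - x1*y3, x1*y2 - x2*y1))"

lemma par:
  fixes x y :: "'a::field vec3"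
  assumes "x \<noteq> (0,0,0)" "cross x y = (0,0,0)"
  shows "\<exists>c. y = smult3 c x"
proof -
  obtain x1 x2 x3 where x: "x = (x1,x2,x3)" by (cases x) auto
  obtain y1 y2 y3 where y: "y = (y1,y2,y3)" by (cases y) auto
  have e: "x2*y3 = x3*y2" "x3*y1 = x1*y3" "x1*y2 = x2*y1" using assms(2) by (auto simp: x y cross_def)
  consider "x1 \<noteq> 0" | "x2 \<noteq> 0" | "x3 \<noteq> 0" using assms(1) x by auto
  then show ?thesis
  proof cases
    case 1 show ?thesis
      apply (rule exI[of _ "y1/x1"]) using 1 e by (auto simp: x y smult3_def field_simps)
  next
    case 2 show ?thesis
      apply (rule exI[of _ "y2/x2"]) using 2 e by (auto simp: x y smult3_def field_simps)
  next
    case 3 show ?thesis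
      apply (rule exI[of _ "y3/x3"]) using 3 e by (auto simp: x y smult3_def field_simps)
  qed
qed

lemma cross_ident: "cross a (cross u v) = (0,0,0)" if "dot3 a u = 0" "dot3 a v = (0::'a::field)"
proof -
  obtain a1 a2 a3 where a: "a = (a1,a2,a3)" by (cases a) auto
  obtain x1 x2 x3 where x: "u = (x1,x2,x3)" by (cases u) auto
  obtain y1 y2 y3 where y: "v = (y1,y2,y3)" by (cases v) auto
  have e: "a1*x1+a2*x2+a3*x3 = 0" "a1*y1+a2*y2+a3*y3 = 0" using that by (auto simp: a x y dot3_def)
  have "cross a (cross u v) = (x1 * (a1*y1+a2*y2+a3*y3) - y1 * (a1*x1+a2*x2+a3*x3),
      x2 * (a1*y1+a2*y2+a3*y3) - y2 * (a1*x1+a2*x2+a3*x3), x3 * (a1*y1+a2*y2+a3*y3) - y3 * (a1*x1+a2*x2+a3*x3))"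
    by (simp add: a x y cross_def algebra_simps)
  then show ?thesis using e by simp
qed

lemma pg_line_smult: "c \<noteq> 0 \<Longrightarrow> pg_line (smult3 c a) = pg_line (a::'a::field vec3)"
  unfolding pg_line_def by (auto simp: dot_smult1)

lemma in_line_iff: "u \<noteq> (0,0,0) \<Longrightarrow> proj_point u \<in> pg_line a \<longleftrightarrow> dot3 a u = (0::'a::field)"
proof -
  assume u: "u \<noteq> (0,0,0)"
  have pp: "proj_point u \<in> pg_points" using u unfolding pg_points_def by blast
  have uu: "u \<in> proj_point u" unfolding proj_point_def by (auto intro!: exI[of _ 1] simp: smult3_1)
  show ?thesis
  proof
    assume "proj_point u \<in> pg_line a"
    then obtain x where "x \<in> proj_point u" "dot3 a x = 0" by (auto simp: pg_line_def)
    then obtain c where "c \<noteq> 0" "x = smult3 c u" "dot3 a x = 0" by (auto simp: proj_point_def)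
    then show "dot3 a u = 0" by (simp add: dot_smult)
  next
    assume "dot3 a u = 0" then show "proj_point u \<in> pg_line a" using pp uu by (auto simp: pg_line_def)
  qed
qed

lemma two_points_one_line:
  fixes P Q :: "'a::field ppoint"
  assumes "P \<in> pg_points" "Q \<in> pg_points" "P \<noteq> Q" "L \<in> pg_lines" "L' \<in> pg_lines"
    "P \<in> L" "Q \<in> L" "P \<in> L'" "Q \<in> L'"
  shows "L = L'"
proof -
  obtain u where u: "u \<noteq> (0,0,0)" "P = proj_point u" using assms(1) by (auto simp: pg_points_def)
  obtain v where v: "v \<noteq> (0,0,0)" "Q = proj_point v" using assms(2) by (auto simp: pg_points_def)
  obtain a where a: "a \<noteq> (0,0,0)" "L = pg_line a" using assms(4) by (auto simp: pg_lines_def)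
  obtain b where b: "b \<noteq> (0,0,0)" "L' = pg_line b" using assms(5) by (auto simp: pg_lines_def)
  define w where "w = cross u v"
  have w: "w \<noteq> (0,0,0)"
  proof
    assume "w = (0,0,0)"
    then have "cross u v = (0,0,0)" using w_def by simp
    then obtain c where c: "v = smult3 c u" using par[OF u(1)] by blast
    with v(1) have "c \<noteq> 0" by (auto simp: smult3_eq0)
    then have "Q = P" using u v c proj_point_smult by metis
    then show False using assms(3) by simp
  qed
  have au: "dot3 a u = 0" "dot3 a v = 0" using assms(6,7) a u v in_line_iff by metis+
  have bu: "dot3 b u = 0" "dot3 b v = 0" using assms(8,9) b u v in_line_iff by metis+
  have cw: "cross w a = (0,0,0)" if "cross a w = (0,0,0)" for a
    using that by (cases a; cases w) (auto simp: cross_def algebra_simps)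
  obtain c where c: "a = smult3 c w"
    using par[OF w cw[OF cross_ident[OF au, folded w_def]]] w_def by auto
  obtain d where d: "b = smult3 d w"
    using par[OF w cw[OF cross_ident[OF bu, folded w_def]]] w_def by auto
  have "c \<noteq> 0" "d \<noteq> 0" using a b c d by (auto simp: smult3_eq0)
  then show ?thesis using a b c d pg_line_smult by metis
qed
lemma roots_bound:
  fixes c :: "'a::field"
  shows "card {z. z^(q+1) = c} \<le> q + 1"
proof -
  define p where "p = monom (1::'a) (q+1) + [:-c:]"
  have dp: "degree p = q + 1" unfolding p_def
    by (subst degree_add_eq_left) (auto simp: degree_monom_eq)
  then have "p \<noteq> 0" by auto
  have "{z. z^(q+1) = c} = {z. poly p z = 0}" by (auto simp: p_def poly_monom)
  then show ?thesis using card_poly_roots_bound[OF \<open>p \<noteq> 0\<close>] dp by simp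
qed

lemma card_herm_zero:
  fixes q :: nat
  shows "card {v :: ('a::{field,finite}) vec3. herm q v = 0} \<le> card (UNIV::'a set)^2 * (q+1)"
proof -
  let ?R = "\<lambda>xy::'a\<times>'a. {z. z^(q+1) = - (fst xy^(q+1) + snd xy^(q+1))}"
  have "{v :: 'a vec3. herm q v = 0} \<subseteq> (\<lambda>(xy,z). (fst xy, snd xy, z)) ` (SIGMA xy:UNIV. ?R xy)"
  proof
    fix v :: "'a vec3" assume "v \<in> {v. herm q v = 0}"
    then obtain x y z where v: "v = (x,y,z)" "x^(q+1) + y^(q+1) + z^(q+1) = 0"
      by (cases v) (auto simp: herm_def)
    then have "z^(q+1) + (x^(q+1) + y^(q+1)) = 0" by (simp add: algebra_simps)
    then have "z^(q+1) = - (x^(q+1) + y^(q+1))" by (simp add: add_eq_0_iff2)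
    then show "v \<in> (\<lambda>(xy,z). (fst xy, snd xy, z)) ` (SIGMA xy:UNIV. ?R xy)"
      using v by (auto intro!: image_eqI[of _ _ "((x,y),z)"])
  qed
  then have "card {v :: 'a vec3. herm q v = 0} \<le> card ((\<lambda>(xy,z). (fst xy, snd xy, z)) ` (SIGMA xy:UNIV. ?R xy))"
    by (intro card_mono) auto
  also have "\<dots> \<le> card (SIGMA xy:UNIV. ?R xy)" by (rule card_image_le) auto
  also have "\<dots> = (\<Sum>xy\<in>UNIV. card (?R xy))" by (rule card_SigmaI) auto
  also have "\<dots> \<le> (\<Sum>xy\<in>(UNIV::('a\<times>'a) set). q + 1)" by (intro sum_mono roots_bound)
  also have "\<dots> = card (UNIV::('a\<times>'a) set) * (q+1)" by simp
  also have "card (UNIV::('a\<times>'a) set) = card (UNIV::'a set)^2"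
    by (metis UNIV_Times_UNIV card_cartesian_product power2_eq_square)
  finally show ?thesis .
qed

lemma card_point:
  assumes "P \<in> (pg_points :: ('a::{field,finite}) ppoint set)"
  shows "card P = card (UNIV::'a set) - 1"
proof -
  obtain u where u: "u \<noteq> (0,0,0)" "P = proj_point u" using assms by (auto simp: pg_points_def)
  have "P = (\<lambda>c. smult3 c u) ` (UNIV - {0})" using u by (auto simp: proj_point_def)
  moreover have "inj_on (\<lambda>c. smult3 c u) (UNIV - {0})"
    using u by (cases u) (auto simp: inj_on_def smult3_def)
  ultimately have "card P = card (UNIV - {0::'a})" by (simp add: card_image)
  then show ?thesis by (simp add: card_Diff_singleton)
qed

lemma card_unital:
  fixes q :: nat
  assumes "card (UNIV::('a::{field,finite}) set) = q^2" "q \<ge> 2"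
  shows "card (unital q :: 'a ppoint set) \<le> 2 * q^3"
proof -
  let ?U = "unital q :: 'a ppoint set"
  have sub: "\<Union>?U \<subseteq> {v. herm q v = 0}"
  proof
    fix x assume "x \<in> \<Union>?U"
    then obtain P where P: "P \<in> ?U" "x \<in> P" by auto
    then have "P \<in> pg_points" "\<exists>w\<in>P. herm q w = 0" by (auto simp: unital_def)
    then obtain u w where u: "u \<noteq> (0,0,0)" "P = proj_point u" "w \<in> P" "herm q w = 0"
      unfolding pg_points_def by blast
    obtain c where c: "c \<noteq> 0" "x = smult3 c u" using P(2) u(2) by (auto simp: proj_point_def)
    obtain d where d: "d \<noteq> 0" "w = smult3 d u" using u(2,3) by (auto simp: proj_point_def)
    have "herm q u = 0" using u(4) d by (simp add: herm_smult)
    then show "x \<in> {v. herm q v = 0}" using c by (simp add: herm_smult)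
  qed
  have disj: "\<forall>A\<in>?U. \<forall>B\<in>?U. A \<noteq> B \<longrightarrow> A \<inter> B = {}"
  proof (intro ballI impI)
    fix A B assume AB: "A \<in> ?U" "B \<in> ?U" "A \<noteq> B"
    show "A \<inter> B = {}"
    proof (rule ccontr)
      assume "A \<inter> B \<noteq> {}"
      then obtain x where x: "x \<in> A" "x \<in> B" by auto
      obtain u where "A = proj_point u" using AB by (auto simp: unital_def pg_points_def)
      obtain v where "B = proj_point v" using AB by (auto simp: unital_def pg_points_def)
      then show False using mem_proj_point x AB \<open>A = proj_point u\<close> by metis
    qed
  qed
  have "card (\<Union>?U) = (\<Sum>P\<in>?U. card P)" by (rule card_Union_disjoint) (use disj in \<open>auto simp: pairwise_def disjnt_def\<close>)
  also have "\<dots> = (\<Sum>P\<in>?U. q^2 - 1)"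
    by (rule sum.cong) (auto simp: unital_def card_point assms(1))
  also have "\<dots> = card ?U * (q^2 - 1)" by simp
  finally have "card ?U * (q^2 - 1) \<le> card {v :: 'a vec3. herm q v = 0}"
    using card_mono[OF _ sub] by simp
  also have "\<dots> \<le> q^4 * (q+1)" using card_herm_zero[where 'a='a, of q] assms(1) by simp
  finally have h: "card ?U * (q^2 - 1) \<le> q^4 * (q+1)" .
  have "q^2 - 1 = (q - 1) * (q + 1)" using assms(2) by (simp add: power2_eq_square algebra_simps)
  with h have "(card ?U * (q - 1)) * (q + 1) \<le> q^4 * (q+1)" by (metis mult.assoc)
  then have "card ?U * (q - 1) \<le> q^4" using mult_le_cancel2[of "card ?U * (q - 1)" "q+1" "q^4"] by simp
  then have "card ?U * (q - 1) * 2 \<le> q^4 * 2" by simp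
  moreover have "q \<le> (q - 1) * 2" using assms(2) by simp
  then have "card ?U * q \<le> card ?U * ((q - 1) * 2)" by (rule mult_le_mono2)
  then have "card ?U * q \<le> card ?U * (q - 1) * 2" by (simp add: mult.assoc)
  ultimately have "card ?U * q \<le> q^4 * 2" by linarith
  also have "q^4 * 2 = (2 * q^3) * q" by (simp add: power_numeral_reduce)
  finally have "card ?U * q \<le> (2 * q^3) * q" .
  then show ?thesis using assms(2) mult_le_cancel2[of "card ?U" q "2*q^3"] by simp
qed
lemma real_choose2: "real (n choose 2) = real n * (real n - 1) / 2"
proof (induction n)
  case 0 then show ?case by simp
next
  case (Suc n)
  have "(Suc n choose 2) = (n choose 1) + (n choose 2)" by (simp add: numeral_2_eq_2)
  then show ?case using Suc by (simp add: field_simps)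
qed

lemma double_count:
  assumes "finite A" "finite B"
  shows "(\<Sum>a\<in>A. card {b\<in>B. R a b}) = (\<Sum>b\<in>B. card {a\<in>A. R a b})"
proof -
  have "(\<Sum>a\<in>A. card {b\<in>B. R a b}) = (\<Sum>a\<in>A. \<Sum>b\<in>B. if R a b then 1 else 0)"
    using assms by (simp add: sum.inter_filter[symmetric])
  also have "\<dots> = (\<Sum>b\<in>B. \<Sum>a\<in>A. if R a b then 1 else 0)" by (rule sum.swap)
  also have "\<dots> = (\<Sum>b\<in>B. card {a\<in>A. R a b})"
    using assms by (simp add: sum.inter_filter[symmetric])
  finally show ?thesis .
qed

lemma large_bound:
  fixes X :: "('a::{field,finite}) pline set" and Lg :: "'a ppoint set"
  assumes X: "X \<subseteq> secants q" and Lg: "Lg \<subseteq> unital q"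
    and b: "b \<ge> 0" "b^2 = 2 * real (card X)"
    and big: "\<And>P. P \<in> Lg \<Longrightarrow> b \<le> real (card {L\<in>X. P \<in> L})"
  shows "(\<Sum>P\<in>Lg. real (card {L\<in>X. P \<in> L})) \<le> 2 * real (card X)"
proof -
  define t where "t P = card {L\<in>X. P \<in> L}" for P
  define d where "d L = card {P\<in>Lg. P \<in> L}" for L
  define k where "k = card Lg"
  define D where "D = (\<Sum>P\<in>Lg. t P)"
  have DL: "D = (\<Sum>L\<in>X. d L)" unfolding D_def t_def d_def by (rule double_count) auto
  have pair: "card {L\<in>X. P \<in> L \<and> Q \<in> L} \<le> 1" if "P \<in> Lg" "Q \<in> Lg" "P \<noteq> Q" for P Q
  proof -
    have "\<forall>x\<in>{L\<in>X. P \<in> L \<and> Q \<in> L}. \<forall>y\<in>{L\<in>X. P \<in> L \<and> Q \<in> L}. x = y"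
    proof (intro ballI)
      fix x y assume "x \<in> {L\<in>X. P \<in> L \<and> Q \<in> L}" "y \<in> {L\<in>X. P \<in> L \<and> Q \<in> L}"
      then show "x = y" using two_points_one_line[of P Q x y] that X Lg
        by (auto simp: secants_def unital_def)
    qed
    then show ?thesis using card_le_Suc0_iff_eq[OF finite, of "{L\<in>X. P \<in> L \<and> Q \<in> L}"] by simp
  qed
  have sq: "d L * d L = (\<Sum>P\<in>Lg. \<Sum>Q\<in>Lg. if P \<in> L \<and> Q \<in> L then 1 else 0)" for L
  proof -
    have "d L = (\<Sum>P\<in>Lg. if P \<in> L then 1 else 0)" unfolding d_def
      by (simp add: sum.inter_filter[symmetric])
    then have "d L * d L = (\<Sum>P\<in>Lg. \<Sum>Q\<in>Lg. (if P \<in> L then 1 else 0) * (if Q \<in> L then 1 else 0))"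
      by (simp add: sum_product)
    also have "\<dots> = (\<Sum>P\<in>Lg. \<Sum>Q\<in>Lg. if P \<in> L \<and> Q \<in> L then 1 else 0)"
      by (intro sum.cong refl) auto
    finally show ?thesis .
  qed
  have "(\<Sum>L\<in>X. d L * d L) = (\<Sum>L\<in>X. \<Sum>P\<in>Lg. \<Sum>Q\<in>Lg. if P \<in> L \<and> Q \<in> L then 1 else 0)"
    by (simp add: sq)
  also have "\<dots> = (\<Sum>P\<in>Lg. \<Sum>L\<in>X. \<Sum>Q\<in>Lg. if P \<in> L \<and> Q \<in> L then 1 else 0)" by (rule sum.swap)
  also have "\<dots> = (\<Sum>P\<in>Lg. \<Sum>Q\<in>Lg. \<Sum>L\<in>X. if P \<in> L \<and> Q \<in> L then 1 else 0)"
    by (rule sum.cong[OF refl], rule sum.swap)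
  also have "\<dots> = (\<Sum>P\<in>Lg. \<Sum>Q\<in>Lg. card {L\<in>X. P \<in> L \<and> Q \<in> L})"
    by (simp add: sum.inter_filter[symmetric])
  also have "\<dots> \<le> (\<Sum>P\<in>Lg. \<Sum>Q\<in>Lg. (if P = Q then t P else 0) + 1)"
  proof (intro sum_mono)
    fix P Q assume "P \<in> Lg" "Q \<in> Lg"
    then show "card {L\<in>X. P \<in> L \<and> Q \<in> L} \<le> (if P = Q then t P else 0) + 1"
      using pair[of P Q] by (cases "P = Q") (auto simp: t_def)
  qed
  also have "\<dots> = (\<Sum>P\<in>Lg. t P + k)"
    by (intro sum.cong refl, subst sum.distrib) (simp add: k_def)
  also have "\<dots> = D + k * k" by (simp add: sum.distrib D_def k_def)
  finally have sq_le: "(\<Sum>L\<in>X. d L * d L) \<le> D + k * k" .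
  have cs: "(real D)^2 \<le> real (card X) * (\<Sum>L\<in>X. (real (d L))^2)"
    using cs_sum[of X "\<lambda>L. real (d L)"] DL by simp
  have "(\<Sum>L\<in>X. (real (d L))^2) = real (\<Sum>L\<in>X. d L * d L)" by (simp add: power2_eq_square)
  also have "\<dots> \<le> real D + real k * real k" using sq_le by (metis of_nat_add of_nat_le_iff of_nat_mult)
  finally have cs2: "(real D)^2 \<le> real (card X) * (real D + real k * real k)"
    using cs by (meson mult_left_mono of_nat_0_le_iff order_trans)
  have kb: "real k * b \<le> real D"
  proof -
    have "real k * b = (\<Sum>P\<in>Lg. b)" by (simp add: k_def)
    also have "\<dots> \<le> (\<Sum>P\<in>Lg. real (t P))" by (intro sum_mono) (auto simp: t_def big)
    finally show ?thesis by (simp add: D_def)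
  qed
  have "(real k * b)^2 \<le> (real D)^2" using kb b(1) by (intro power_mono) auto
  moreover have "(real k * b)^2 = 2 * real (card X) * (real k * real k)"
    using b(2) by (simp add: power_mult_distrib power2_eq_square)
  ultimately have k2: "2 * real (card X) * (real k * real k) \<le> (real D)^2" by simp
  have "real D \<le> 2 * real (card X)"
  proof (cases "D = 0")
    case True then show ?thesis by simp
  next
    case False
    then have Dp: "real D > 0" by simp
    from cs2 k2 have "(real D)^2 \<le> real (card X) * real D + (real D)^2 / 2"
      by (simp add: algebra_simps)
    then have "real D * real D \<le> (2 * real (card X)) * real D" by (simp add: power2_eq_square algebra_simps)
    then show ?thesis using Dp by simp
  qed
  then show ?thesis by (simp add: D_def t_def)
qed
theorem mainTheorem6:
  fixes q :: nat and X :: "('a::{field,finite}) pline set"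
  assumes "\<exists>p k. prime p \<and> k \<ge> 1 \<and> q = p ^ k"
    and "q \<ge> 2"
    and "card (UNIV :: 'a set) = q ^ 2"
    and "X \<subseteq> secants q"
    and "card X = 2 ^ 24 * q ^ 2"
  shows "let n = real (q ^ 2 * (q ^ 2 - q + 1)); m = real (2 ^ 24 * q ^ 2) in
     clique_sum q X (-1) (sqrt (2 * m) / ln n) \<ge> m ^ 2 / (64 * real q)
   \<or> clique_sum q X (sqrt (2 * m) / ln n) (sqrt (2 * m))
        \<ge> real q * m powr (3 / 2) / (16 * (ln n) ^ 2)"
proof -
  define Q where "Q = real q"
  have q2: "Q \<ge> 2" using assms(2) by (simp add: Q_def)
  define N where "N = q ^ 2 * (q ^ 2 - q + 1)"
  define m where "m = real (2 ^ 24 * q ^ 2)"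
  define Ln where "Ln = ln (real N)"
  define b where "b = sqrt (2 * m)"
  define a where "a = b / Ln"
  define U where "U = (unital q :: 'a ppoint set)"
  define t where "t P = card (X \<inter> clique q P)" for P
  have tX: "t P = card {L\<in>X. P \<in> L}" for P
    using assms(4) unfolding t_def clique_def by (intro arg_cong[where f=card]) auto
  have mQ: "m = 2^24 * Q^2" by (simp add: m_def Q_def)
  have mX: "real (card X) = m" using assms(5) by (simp add: m_def)
  have sqm: "sqrt m = 4096 * Q"
  proof -
    have e: "m = (4096 * Q)^2" using mQ by (simp add: power_mult_distrib)
    have "sqrt m = \<bar>4096 * Q\<bar>" by (simp only: e real_sqrt_abs)
    then show ?thesis using q2 by simp
  qed
  have qq: "q * q \<ge> 2 * q" using assms(2) by simp
  have N12: "N \<ge> 12"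
  proof -
    have "q^2 \<ge> 4" using power_mono[OF assms(2), of 2] by simp
    moreover have "q^2 - q + 1 \<ge> 3" using qq assms(2) unfolding power2_eq_square by linarith
    ultimately show ?thesis unfolding N_def using mult_le_mono[of 4 "q^2" 3 "q^2 - q + 1"] by simp
  qed
  have N4: "N \<le> q^4"
  proof -
    have "q^2 - q + 1 \<le> q^2" using qq assms(2) unfolding power2_eq_square by linarith
    then have "N \<le> q^2 * q^2" unfolding N_def by (rule mult_le_mono2)
    then show ?thesis by (simp add: power_numeral_reduce power2_eq_square)
  qed
  have L2: "Ln \<ge> 2"
  proof -
    have "exp (2::real) = exp 1 * exp 1" by (simp add: exp_add[symmetric])
    also have "\<dots> \<le> 3 * 3" using exp_le by (intro mult_mono) auto
    also have "\<dots> \<le> real N" using N12 by simp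
    finally show ?thesis unfolding Ln_def using N12 by (subst ln_ge_iff) auto
  qed
  have L4: "Ln \<le> 4 * Q"
  proof -
    have "Ln \<le> ln (Q^4)" unfolding Ln_def Q_def using N12 N4 assms(2)
      by (subst ln_le_cancel_iff) (auto simp flip: of_nat_power)
    also have "\<dots> = 4 * ln Q" by (simp add: ln_realpow)
    also have "\<dots> \<le> 4 * (Q - 1)" using ln_le_minus_one[of Q] q2 by simp
    finally show ?thesis by simp
  qed
  have b2: "b^2 = 2 * m" unfolding b_def using mQ by simp
  have bQ: "b \<ge> 4096 * Q" unfolding b_def using mQ by (intro real_le_rsqrt) (simp add: power_mult_distrib)
  have a2: "a \<ge> 2"
  proof -
    have "a \<ge> b / (4 * Q)" unfolding a_def using L2 L4 q2 bQ
      by (intro divide_left_mono) auto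
    moreover have "b / (4 * Q) \<ge> 1024" using bQ q2 by (simp add: field_simps)
    ultimately show ?thesis by simp
  qed
  have ab: "a \<le> b" unfolding a_def using L2 bQ q2 by (simp add: field_simps)
  define S0 where "S0 = {P\<in>U. t P \<le> 1}"
  define Sm where "Sm = {P\<in>U. 2 \<le> t P \<and> -1 < real (t P) \<and> real (t P) \<le> a}"
  define Md where "Md = {P\<in>U. 2 \<le> t P \<and> a < real (t P) \<and> real (t P) \<le> b}"
  define Lg where "Lg = {P\<in>U. b < real (t P)}"
  have cs1: "clique_sum q X (-1) a = (\<Sum>P\<in>Sm. real (t P choose 2))"
    by (simp add: clique_sum_def Sm_def t_def U_def)
  have cs2: "clique_sum q X a b = (\<Sum>P\<in>Md. real (t P choose 2))"
    by (simp add: clique_sum_def Md_def t_def U_def)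
  have total: "(\<Sum>P\<in>U. real (t P)) = m * (Q + 1)"
  proof -
    have "(\<Sum>P\<in>U. t P) = (\<Sum>L\<in>X. card {P\<in>U. P \<in> L})" unfolding tX by (rule double_count) auto
    also have "\<dots> = (\<Sum>L\<in>X. q + 1)"
    proof (intro sum.cong refl)
      fix L assume "L \<in> X"
      then have "card (L \<inter> unital q) = q + 1" using assms(4) by (auto simp: secants_def)
      moreover have "{P\<in>U. P \<in> L} = L \<inter> unital q" by (auto simp: U_def)
      ultimately show "card {P\<in>U. P \<in> L} = q + 1" by simp
    qed
    finally have "(\<Sum>P\<in>U. t P) = card X * (q + 1)" by simp
    then have "real (\<Sum>P\<in>U. t P) = real (card X) * (Q + 1)" by (simp add: Q_def algebra_simps)
    then show ?thesis using mX by simp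
  qed
  have decomp: "(\<Sum>P\<in>U. real (t P)) = (\<Sum>P\<in>S0. real (t P)) + (\<Sum>P\<in>Sm. real (t P))
      + (\<Sum>P\<in>Md. real (t P)) + (\<Sum>P\<in>Lg. real (t P))"
  proof -
    have "(\<Sum>P\<in>U. real (t P)) = (\<Sum>P\<in>U. (if t P \<le> 1 then real (t P) else 0)
        + (if 2 \<le> t P \<and> -1 < real (t P) \<and> real (t P) \<le> a then real (t P) else 0)
        + (if 2 \<le> t P \<and> a < real (t P) \<and> real (t P) \<le> b then real (t P) else 0)
        + (if b < real (t P) then real (t P) else 0))"
    proof (intro sum.cong refl)
      fix P
      have "t P \<le> 1 \<or> 2 \<le> t P" by linarith
      then show "real (t P) = (if t P \<le> 1 then real (t P) else 0)
        + (if 2 \<le> t P \<and> -1 < real (t P) \<and> real (t P) \<le> a then real (t P) else 0)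
        + (if 2 \<le> t P \<and> a < real (t P) \<and> real (t P) \<le> b then real (t P) else 0)
        + (if b < real (t P) then real (t P) else 0)"
        using ab a2 by auto
    qed
    also have "\<dots> = (\<Sum>P\<in>S0. real (t P)) + (\<Sum>P\<in>Sm. real (t P))
      + (\<Sum>P\<in>Md. real (t P)) + (\<Sum>P\<in>Lg. real (t P))"
      unfolding S0_def Sm_def Md_def Lg_def by (simp add: sum.distrib sum.inter_filter)
    finally show ?thesis .
  qed
  have cU: "real (card U) \<le> 2 * Q^3"
    using card_unital[OF assms(3) assms(2)] unfolding U_def Q_def by (metis of_nat_le_iff of_nat_mult of_nat_numeral of_nat_power)
  have s0: "(\<Sum>P\<in>S0. real (t P)) \<le> 2 * Q^3"
  proof -
    have "(\<Sum>P\<in>S0. real (t P)) \<le> (\<Sum>P\<in>S0. 1)" by (intro sum_mono) (auto simp: S0_def)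
    also have "\<dots> = real (card S0)" by simp
    also have "\<dots> \<le> real (card U)" by (simp add: S0_def card_mono)
    finally show ?thesis using cU by simp
  qed
  have lg: "(\<Sum>P\<in>Lg. real (t P)) \<le> 2 * m"
  proof -
    have "Lg \<subseteq> unital q" by (auto simp: Lg_def U_def)
    moreover have "b \<ge> 0" by (simp add: b_def mQ)
    moreover have "b^2 = 2 * real (card X)" using b2 mX by simp
    moreover have "\<And>P. P \<in> Lg \<Longrightarrow> b \<le> real (card {L\<in>X. P \<in> L})"
      by (auto simp: Lg_def tX[symmetric])
    ultimately have "(\<Sum>P\<in>Lg. real (card {L\<in>X. P \<in> L})) \<le> 2 * real (card X)"
      by (rule large_bound[OF assms(4)])
    then show ?thesis using mX by (simp add: tX[symmetric])
  qed
  define A where "A = (\<Sum>P\<in>Sm. real (t P))"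
  define B where "B = (\<Sum>P\<in>Md. real (t P))"
  have AB: "A + B \<ge> (2^23 - 2) * Q^3"
  proof -
    have "A + B \<ge> m * (Q + 1) - 2 * m - 2 * Q^3" using total decomp s0 lg A_def B_def by linarith
    moreover have "m * (Q + 1) - 2 * m - 2 * Q^3 \<ge> (2^23 - 2) * Q^3"
    proof -
      have "0 \<le> 2^23 * Q^2 * (Q - 2)" using q2 by simp
      then show ?thesis unfolding mQ by (simp add: algebra_simps power_numeral_reduce)
    qed
    ultimately show ?thesis by linarith
  qed
  have Q3: "Q^3 > 0" using q2 by simp
  show ?thesis
  proof (cases "B \<ge> 2^21 * Q^3")
    case True
    have "clique_sum q X a b \<ge> (\<Sum>P\<in>Md. real (t P) * a / 4)"
      unfolding cs2
    proof (intro sum_mono)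
      fix P assume P: "P \<in> Md"
      then have "real (t P) > a" by (simp add: Md_def)
      then have "real (t P) - 1 \<ge> a / 2" using a2 by simp
      then have "real (t P) * (a / 2) \<le> real (t P) * (real (t P) - 1)" by (intro mult_left_mono) auto
      then show "real (t P) * a / 4 \<le> real (t P choose 2)" by (simp add: real_choose2 mult.commute)
    qed
    also have "(\<Sum>P\<in>Md. real (t P) * a / 4) = B * a / 4"
      by (simp add: B_def sum_divide_distrib sum_distrib_right)
    finally have c1: "clique_sum q X a b \<ge> B * a / 4" .
    have "a \<ge> 4096 * Q / Ln" unfolding a_def using bQ L2 by (simp add: divide_right_mono)
    then have f1: "B * a / 4 \<ge> (2^21 * Q^3) * (4096 * Q / Ln) / 4"
      using True q2 L2 Q3 by (intro divide_right_mono mult_mono) (auto simp: B_def intro!: sum_nonneg)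
    have f2: "(2^21 * Q^3) * (4096 * Q / Ln) / 4 = 2^31 * Q^4 / Ln" by (simp add: power_numeral_reduce field_simps)
    have f3: "2^31 * Q^4 / Ln \<ge> 2^32 * Q^4 / Ln^2"
    proof -
      have "2^32 * Q^4 / Ln^2 = (2^31 * Q^4 / Ln) * (2 / Ln)" using L2 by (simp add: power2_eq_square field_simps)
      also have "\<dots> \<le> (2^31 * Q^4 / Ln) * 1" using L2 q2 by (intro mult_left_mono) auto
      finally show ?thesis by simp
    qed
    have f4: "2^32 * Q^4 / Ln^2 = Q * m powr (3/2) / (16 * Ln^2)"
    proof -
      have "m powr (3/2) = m powr (1 + 1/2)" by simp
      also have "\<dots> = m * sqrt m" unfolding powr_add using mQ by (simp add: powr_half_sqrt)
      finally have "m powr (3/2) = 2^24 * Q^2 * (4096 * Q)" using sqm mQ by simp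
      then show ?thesis by (simp add: power_numeral_reduce field_simps)
    qed
    have "clique_sum q X a b \<ge> Q * m powr (3/2) / (16 * Ln^2)" using c1 f1 f2 f3 f4 by linarith
    then show ?thesis unfolding Let_def a_def b_def Ln_def m_def Q_def N_def by simp
  next
    case False
    then have Abig: "A \<ge> 6291454 * Q^3" using AB by simp
    define S2 where "S2 = (\<Sum>P\<in>Sm. (real (t P))^2)"
    have c1: "clique_sum q X (-1) a = (S2 - A) / 2"
      unfolding cs1 S2_def A_def
      by (simp add: real_choose2 sum_divide_distrib[symmetric] sum_subtractf[symmetric] power2_eq_square algebra_simps)
    have "A^2 \<le> real (card Sm) * S2" unfolding A_def S2_def by (rule cs_sum) auto
    also have "\<dots> \<le> (2 * Q^3) * S2"
    proof (intro mult_right_mono)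
      show "real (card Sm) \<le> 2 * Q^3" 
      proof -
        have "real (card Sm) \<le> real (card U)" by (simp add: Sm_def card_mono)
        then show ?thesis using cU by linarith
      qed
      show "0 \<le> S2" unfolding S2_def by (intro sum_nonneg) auto
    qed
    finally have csA: "A^2 \<le> (2 * Q^3) * S2" .
    have "A - 2 * Q^3 \<ge> 6291452 * Q^3" using Abig by simp
    then have "A * (A - 2 * Q^3) \<ge> (6291454 * Q^3) * (6291452 * Q^3)"
      using Abig Q3 by (intro mult_mono) (auto simp: A_def intro!: sum_nonneg)
    then have "(2 * Q^3) * (S2 - A) \<ge> (6291454 * 6291452) * (Q^3 * Q^3)"
      using csA by (simp add: power2_eq_square algebra_simps)
    moreover have "(6291454 * 6291452) * (Q^3 * Q^3) \<ge> (2 * Q^3) * (2^43 * Q^3)"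
      using Q3 by (simp add: algebra_simps)
    ultimately have "(2 * Q^3) * (S2 - A) \<ge> (2 * Q^3) * (2^43 * Q^3)" by linarith
    then have "S2 - A \<ge> 2^43 * Q^3" by (rule mult_left_le_imp_le) (use Q3 in simp)
    then have "clique_sum q X (-1) a \<ge> 2^42 * Q^3" using c1 by simp
    moreover have "m^2 / (64 * Q) = 2^42 * Q^3" using q2 unfolding mQ
      by (simp add: power_numeral_reduce field_simps)
    ultimately have "clique_sum q X (-1) a \<ge> m^2 / (64 * Q)" by simp
    then show ?thesis unfolding Let_def a_def b_def Ln_def m_def Q_def N_def by simp
  qed
qed
end
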